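(* Let $T \in \mathbb{R}^4 \otimes \mathbb{R}^4 \otimes \mathbb{R}^4$ be the structure tensor of quaternion multiplication with respect to the basis $(1,i,j,k)$ of $\mathbb{H}$, i.e. $T = \sum_{a,b} e_a \otimes e_b \otimes c(x_a x_b)$ where $x_1,\ldots,x_4 = 1,i,j,k$ and $c : \mathbb{H} \to \mathbb{R}^4$ is the coordinate map. Then $Q(T) = 2$, and there is a neighborhood of $T$ in the Euclidean topology in which every tensor has real subrank $2$.
   Context: $\mathbb{H}$ denotes Hamilton's quaternions: the real algebra with basis $1,i,j,k$, unit $1$, $i^2=j^2=k^2=-1$, $ij=k=-ji$, $jk=i=-kj$, $ki=j=-ik$. For $r \geq 0$ let $I_r := \sum_{j=1}^r e_j \otimes e_j \otimes e_j$. The subrank of $T \in \mathbb{R}^{n_1} \otimes \mathbb{R}^{n_2} \otimes \mathbb{R}^{n_3}$ is $Q(T) := \max\{ r \mid \exists\ \mathbb{R}\text{-linear } \varphi_i : \mathbb{R}^{n_i} \to \mathbb{R}^r,\ (\varphi_1 \otimes \varphi_2 \otimes \varphi_3) T = I_r\}$. *)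

theory Defs
  imports Complex_Main
begin

text \<open>Tensors in R^n1 (x) R^n2 (x) R^n3 are represented as functions
  nat => nat => nat => real, only entries with indices below n_i matter.
  A linear map R^n -> R^r is represented by its r x n matrix (nat => nat => real).\<close>

type_synonym tensor3 = "nat \<Rightarrow> nat \<Rightarrow> nat \<Rightarrow> real"

definition unit_tensor :: "nat \<Rightarrow> tensor3" where
  "unit_tensor r = (\<lambda>i j k. if i = j \<and> j = k \<and> i < r then 1 else 0)"

definition restrict3 ::
  "(nat \<Rightarrow> nat \<Rightarrow> real) \<Rightarrow> (nat \<Rightarrow> nat \<Rightarrow> real) \<Rightarrow> (nat \<Rightarrow> nat \<Rightarrow> real)
   \<Rightarrow> nat \<Rightarrow> nat \<Rightarrow> nat \<Rightarrow> tensor3 \<Rightarrow> tensor3" where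
  "restrict3 A B C n1 n2 n3 T = (\<lambda>i j k.
     \<Sum>a<n1. \<Sum>b<n2. \<Sum>c<n3. A i a * B j b * C k c * T a b c)"

definition subrank_achievable :: "nat \<Rightarrow> nat \<Rightarrow> nat \<Rightarrow> tensor3 \<Rightarrow> nat \<Rightarrow> bool" where
  "subrank_achievable n1 n2 n3 T r \<longleftrightarrow>
     (\<exists>A B C. \<forall>i<r. \<forall>j<r. \<forall>k<r.
        restrict3 A B C n1 n2 n3 T i j k = unit_tensor r i j k)"

definition subrank :: "nat \<Rightarrow> nat \<Rightarrow> nat \<Rightarrow> tensor3 \<Rightarrow> nat" where
  "subrank n1 n2 n3 T = Max {r. subrank_achievable n1 n2 n3 T r}"

text \<open>Hamilton product on coordinate vectors w.r.t. basis (1,i,j,k) = indices 0,1,2,3.\<close>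
definition hmult :: "(nat \<Rightarrow> real) \<Rightarrow> (nat \<Rightarrow> real) \<Rightarrow> (nat \<Rightarrow> real)" where
  "hmult p q = (\<lambda>c.
     if c = 0 then p 0 * q 0 - p 1 * q 1 - p 2 * q 2 - p 3 * q 3
     else if c = 1 then p 0 * q 1 + p 1 * q 0 + p 2 * q 3 - p 3 * q 2
     else if c = 2 then p 0 * q 2 - p 1 * q 3 + p 2 * q 0 + p 3 * q 1
     else if c = 3 then p 0 * q 3 + p 1 * q 2 - p 2 * q 1 + p 3 * q 0
     else 0)"

definition basis_vec :: "nat \<Rightarrow> nat \<Rightarrow> real" where
  "basis_vec a = (\<lambda>i. if i = a then 1 else 0)"

definition quat_tensor :: tensor3 where
  "quat_tensor = (\<lambda>a b c. if a < 4 \<and> b < 4 then hmult (basis_vec a) (basis_vec b) c else 0)"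

end

theory Submission imports Defs "HOL-Analysis.Analysis" begin

definition W :: "tensor3 \<Rightarrow> (nat\<Rightarrow>real) \<Rightarrow> (nat\<Rightarrow>real) \<Rightarrow> nat \<Rightarrow> real" where
  "W T x y c = (\<Sum>a<4. \<Sum>b<4. x a * y b * T a b c)"

definition Fro :: "tensor3 \<Rightarrow> real" where
  "Fro T = (\<Sum>a<4. \<Sum>b<4. \<Sum>c<4. (T a b c - quat_tensor a b c)\<^sup>2)"

lemma W_quat: "c < 4 \<Longrightarrow> W quat_tensor x y c = hmult x y c"
  apply (simp add: W_def quat_tensor_def numeral_eq_Suc lessThan_Suc)
  apply (simp add: less_Suc_eq hmult_def basis_vec_def)
  apply (elim disjE; simp add: hmult_def basis_vec_def numeral_3_eq_3 numeral_2_eq_2 algebra_simps)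
  done
lemma four_square: "(\<Sum>c<4. (hmult x y c)\<^sup>2) = (\<Sum>a<4. (x a)\<^sup>2) * (\<Sum>b<4. (y b)\<^sup>2)"
  apply (simp add: hmult_def numeral_eq_Suc lessThan_Suc)
  apply (simp add: power2_eq_square algebra_simps)
  done

lemma W_split: "W T x y c = W quat_tensor x y c + W (\<lambda>a b c. T a b c - quat_tensor a b c) x y c"
proof -
  have "W T x y c = (\<Sum>a<4. \<Sum>b<4. x a * y b * quat_tensor a b c + x a * y b * (T a b c - quat_tensor a b c))"
    unfolding W_def by (intro sum.cong refl) (simp add: algebra_simps)
  thus ?thesis unfolding W_def by (simp only: sum.distrib)
qed

lemma W_CS: "(W E x y c)\<^sup>2 \<le> (\<Sum>a<4. (x a)\<^sup>2) * (\<Sum>b<4. (y b)\<^sup>2) * (\<Sum>a<4. \<Sum>b<4. (E a b c)\<^sup>2)"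
proof -
  have "W E x y c = (\<Sum>p\<in>{..<4::nat}\<times>{..<4::nat}. (x (fst p) * y (snd p)) * E (fst p) (snd p) c)"
    by (simp add: W_def sum.cartesian_product case_prod_beta)
  then have "(W E x y c)\<^sup>2 \<le> (\<Sum>p\<in>{..<4::nat}\<times>{..<4::nat}. (x (fst p) * y (snd p))\<^sup>2) *
      (\<Sum>p\<in>{..<4::nat}\<times>{..<4::nat}. (E (fst p) (snd p) c)\<^sup>2)"
    by (simp only: Cauchy_Schwarz_ineq_sum)
  also have "(\<Sum>p\<in>{..<4::nat}\<times>{..<4::nat}. (x (fst p) * y (snd p))\<^sup>2) = (\<Sum>a<4. (x a)\<^sup>2) * (\<Sum>b<4. (y b)\<^sup>2)"
    unfolding sum_product sum.cartesian_product by (simp add: case_prod_beta power_mult_distrib)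
  also have "(\<Sum>p\<in>{..<4::nat}\<times>{..<4::nat}. (E (fst p) (snd p) c)\<^sup>2) = (\<Sum>a<4. \<Sum>b<4. (E a b c)\<^sup>2)"
    by (simp add: sum.cartesian_product case_prod_beta)
  finally show ?thesis .
qed

lemma sumsq_zero: "(\<Sum>a<(4::nat). (x a)\<^sup>2) = 0 \<Longrightarrow> a < 4 \<Longrightarrow> x a = (0::real)"
  by (subst (asm) sum_nonneg_eq_0_iff) auto

lemma swap3: "(\<Sum>c\<in>C. \<Sum>a\<in>A. \<Sum>b\<in>B. g a b c) = (\<Sum>a\<in>A. \<Sum>b\<in>B. \<Sum>c\<in>C. (g a b c::real))"
proof -
  have "(\<Sum>c\<in>C. \<Sum>a\<in>A. \<Sum>b\<in>B. g a b c) = (\<Sum>a\<in>A. \<Sum>c\<in>C. \<Sum>b\<in>B. g a b c)"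
    by (rule sum.swap)
  also have "\<dots> = (\<Sum>a\<in>A. \<Sum>b\<in>B. \<Sum>c\<in>C. g a b c)"
    by (rule sum.cong[OF refl], rule sum.swap)
  finally show ?thesis .
qed

lemma nondeg:
  assumes F: "Fro T < 1" and Z: "\<forall>c<4. W T x y c = 0"
  shows "(\<forall>a<4. x a = 0) \<or> (\<forall>b<4. y b = 0)"
proof -
  define E where "E = (\<lambda>a b c. T a b c - quat_tensor a b c)"
  define X where "X = (\<Sum>a<4. (x a)\<^sup>2)"
  define Y where "Y = (\<Sum>b<4. (y b)\<^sup>2)"
  have h: "hmult x y c = - W E x y c" if c: "c < 4" for c
  proof -
    have "W T x y c = 0" using Z c by blast
    moreover have "W T x y c = W quat_tensor x y c + W E x y c"
      unfolding E_def by (rule W_split)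
    moreover have "W quat_tensor x y c = hmult x y c" using c by (rule W_quat)
    ultimately show ?thesis by linarith
  qed
  have "X * Y = (\<Sum>c<4. (hmult x y c)\<^sup>2)" unfolding four_square X_def Y_def ..
  also have "\<dots> = (\<Sum>c<4. (W E x y c)\<^sup>2)" by (rule sum.cong) (simp_all add: h)
  also have "\<dots> \<le> (\<Sum>c<4. X * Y * (\<Sum>a<4. \<Sum>b<4. (E a b c)\<^sup>2))"
    by (rule sum_mono) (unfold X_def Y_def, rule W_CS)
  also have "\<dots> = X * Y * (\<Sum>c<4. \<Sum>a<4. \<Sum>b<4. (E a b c)\<^sup>2)"
    by (simp only: sum_distrib_left)
  also have "\<dots> = X * Y * Fro T" unfolding Fro_def E_def by (subst swap3) (rule refl)
  finally have a1: "X * Y \<le> X * Y * Fro T" .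
  have a2: "X * Y \<ge> 0" unfolding X_def Y_def by (intro mult_nonneg_nonneg sum_nonneg) simp_all
  have "X * Y * (1 - Fro T) \<le> 0" using a1 by (simp add: algebra_simps)
  moreover have "1 - Fro T > 0" using F by simp
  ultimately have "X * Y \<le> 0" by (simp add: mult_le_0_iff)
  hence "X * Y = 0" using a2 by linarith
  hence "X = 0 \<or> Y = 0" by simp
  thus ?thesis using sumsq_zero unfolding X_def Y_def by blast
qed

type_synonym r4 = "real \<times> real \<times> real \<times> real"
type_synonym r5 = "real \<times> real \<times> real \<times> real \<times> real"

lemma no_inj54:
  fixes f :: "r5 \<Rightarrow> r4"
  assumes "linear f" "inj f" shows False
proof -
  have "dim (f ` UNIV) = dim (UNIV :: r5 set)"
    using dim_image_eq[OF assms(1)] assms(2) by (simp add: inj_on_subset)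
  moreover have "dim (f ` UNIV) \<le> DIM(r4)" by (metis dim_subset_UNIV)
  ultimately show False by simp
qed

definition tri :: "tensor3 \<Rightarrow> (nat\<Rightarrow>real) \<Rightarrow> (nat\<Rightarrow>real) \<Rightarrow> (nat\<Rightarrow>real) \<Rightarrow> real" where
  "tri T x y z = (\<Sum>c<4. z c * W T x y c)"

lemma restrict_tri: "restrict3 A B C 4 4 4 T i j k = tri T (A i) (B j) (C k)"
proof -
  have "tri T (A i) (B j) (C k) = (\<Sum>c<4. \<Sum>a<4. \<Sum>b<4. A i a * B j b * C k c * T a b c)"
    unfolding tri_def W_def by (simp add: sum_distrib_left algebra_simps)
  also have "\<dots> = restrict3 A B C 4 4 4 T i j k"
    unfolding restrict3_def by (subst swap3) (rule refl)
  finally show ?thesis by simp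
qed

lemma W_lin_y: "W T x (\<lambda>b. s * y1 b + t * y2 b) c = s * W T x y1 c + t * W T x y2 c"
  unfolding W_def by (simp add: sum_distrib_left sum.distrib algebra_simps)

lemma tri_lin_y: "tri T x (\<lambda>b. s * y1 b + t * y2 b) z = s * tri T x y1 z + t * tri T x y2 z"
  unfolding tri_def W_lin_y by (simp add: sum_distrib_left sum.distrib algebra_simps)

lemma tri_lin_z: "tri T x y (\<lambda>c. u0 * z0 c + u1 * z1 c + u2 * z2 c) = u0 * tri T x y z0 + u1 * tri T x y z1 + u2 * tri T x y z2"
  unfolding tri_def by (simp add: sum_distrib_left sum.distrib algebra_simps)

lemma W_zero_y: "\<forall>b<4. y b = 0 \<Longrightarrow> W T x y c = 0"
  unfolding W_def by simp

lemma W_zero_x: "\<forall>a<4. x a = 0 \<Longrightarrow> W T x y c = 0"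
  unfolding W_def by simp

lemma tri_zero_y: "\<forall>b<4. y b = 0 \<Longrightarrow> tri T x y z = 0"
  unfolding tri_def using W_zero_y by simp

lemma tri_zero_x: "\<forall>a<4. x a = 0 \<Longrightarrow> tri T x y z = 0"
  unfolding tri_def using W_zero_x by simp

lemma tri_zero_z: "\<forall>c<4. z c = 0 \<Longrightarrow> tri T x y z = 0"
  unfolding tri_def by simp

lemma less4: "(c::nat) < 4 \<longleftrightarrow> c = 0 \<or> c = 1 \<or> c = 2 \<or> c = 3" by auto

definition vec4 :: "(nat \<Rightarrow> real) \<Rightarrow> r4" where
  "vec4 v = (v 0, v 1, v 2, v 3)"

lemma no3:
  assumes F: "Fro T < 1"
  shows "\<not> subrank_achievable 4 4 4 T 3"
proof
  assume "subrank_achievable 4 4 4 T 3"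
  then obtain A B C where ABC: "\<forall>i<3. \<forall>j<3. \<forall>k<3. restrict3 A B C 4 4 4 T i j k = unit_tensor 3 i j k"
    unfolding subrank_achievable_def by blast
  have D: "tri T (A i) (B j) (C k) = (if i = j \<and> j = k then 1 else 0)" if "i < 3" "j < 3" "k < 3" for i j k
    using ABC that by (simp add: restrict_tri unit_tensor_def)
  define x where "x = A 0"
  have xnz: "\<not> (\<forall>a<4. x a = 0)"
  proof
    assume "\<forall>a<4. x a = 0"
    hence "tri T (A 0) (B 0) (C 0) = 0" using tri_zero_x x_def by blast
    thus False using D[of 0 0 0] by simp
  qed
  define w1 where "w1 = W T x (B 1)"
  define w2 where "w2 = W T x (B 2)"
  define f :: "r5 \<Rightarrow> r4" where "f = (\<lambda>p. fst p *\<^sub>R vec4 (C 0) + fst (snd p) *\<^sub>R vec4 (C 1) +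
     fst (snd (snd p)) *\<^sub>R vec4 (C 2) + fst (snd (snd (snd p))) *\<^sub>R vec4 w1 + snd (snd (snd (snd p))) *\<^sub>R vec4 w2)"
  have lin: "linear f" unfolding f_def
    by (rule linearI) (auto simp: algebra_simps scaleR_add_left)
  have "inj f"
    unfolding linear_injective_0[OF lin]
  proof (intro allI impI)
    fix p :: r5 assume fp: "f p = 0"
    obtain u0 u1 u2 s t where p: "p = (u0, u1, u2, s, t)" by (cases p) auto
    define h where "h = (\<lambda>c. u0 * C 0 c + u1 * C 1 c + u2 * C 2 c + s * w1 c + t * w2 c)"
    have h0: "\<forall>c<4. h c = 0" using fp unfolding less4 f_def p h_def vec4_def by (auto simp: algebra_simps zero_prod_def)
    define y where "y = (\<lambda>b. s * B 1 b + t * B 2 b)"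
    define v where "v = W T x y"
    have v: "v c = s * w1 c + t * w2 c" for c unfolding v_def y_def w1_def w2_def W_lin_y ..
    have vC: "(\<Sum>c<4. C k c * v c) = 0" if "k < 3" for k
    proof -
      have "(\<Sum>c<4. C k c * v c) = tri T x y (C k)" unfolding tri_def v_def ..
      also have "\<dots> = s * tri T x (B 1) (C k) + t * tri T x (B 2) (C k)" unfolding y_def tri_lin_y ..
      also have "\<dots> = 0" using D[of 0 1 k] D[of 0 2 k] that x_def by simp
      finally show ?thesis .
    qed
    have "(\<Sum>c<4. v c * h c) = 0" using h0 by simp
    moreover have "(\<Sum>c<4. v c * h c) = u0 * (\<Sum>c<4. C 0 c * v c) + u1 * (\<Sum>c<4. C 1 c * v c)
        + u2 * (\<Sum>c<4. C 2 c * v c) + (\<Sum>c<4. (v c)\<^sup>2)"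
      unfolding h_def v by (simp add: numeral_eq_Suc lessThan_Suc algebra_simps power2_eq_square)
    ultimately have "(\<Sum>c<4. (v c)\<^sup>2) = 0" using vC[of 0] vC[of 1] vC[of 2] by simp
    hence v0: "\<forall>c<4. W T x y c = 0" using sumsq_zero v_def by blast
    have y0: "\<forall>b<4. y b = 0" using nondeg[OF F v0] xnz by blast
    have "s = 0"
    proof -
      have "tri T (A 1) y (C 1) = 0" using tri_zero_y y0 by blast
      moreover have "tri T (A 1) y (C 1) = s" unfolding y_def tri_lin_y using D[of 1 1 1] D[of 1 2 1] by simp
      ultimately show ?thesis by simp
    qed
    have "t = 0"
    proof -
      have "tri T (A 2) y (C 2) = 0" using tri_zero_y y0 by blast
      moreover have "tri T (A 2) y (C 2) = t" unfolding y_def tri_lin_y using D[of 2 1 2] D[of 2 2 2] by simp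
      ultimately show ?thesis by simp
    qed
    define z where "z = (\<lambda>c. u0 * C 0 c + u1 * C 1 c + u2 * C 2 c)"
    have z0: "\<forall>c<4. z c = 0" using h0 \<open>s = 0\<close> \<open>t = 0\<close> unfolding h_def z_def by simp
    have u: "u = 0" if "k < 3" "u = (if k = 0 then u0 else if k = 1 then u1 else u2)" for k :: nat and u
    proof -
      have "tri T (A k) (B k) z = 0" using tri_zero_z z0 by blast
      moreover have "tri T (A k) (B k) z = u" unfolding z_def tri_lin_z
        using D[of k k 0] D[of k k 1] D[of k k 2] that by auto
      ultimately show ?thesis by simp
    qed
    show "p = 0" using u[of 0 u0] u[of 1 u1] u[of 2 u2] \<open>s = 0\<close> \<open>t = 0\<close> p by (simp add: zero_prod_def)
  qed
  thus False using no_inj54 lin by blast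
qed

lemma sq: "(y::real)\<^sup>2 < (1/8)\<^sup>2 \<Longrightarrow> \<bar>y\<bar> \<le> 1/8"
  by (metis abs_of_nonneg less_imp_le power2_abs power_less_imp_less_base zero_le_divide_1_iff zero_le_numeral)

lemma entry_small:
  assumes F: "Fro T < 1/64" and abc: "a < 4" "b < 4" "c < 4"
  shows "\<bar>T a b c - quat_tensor a b c\<bar> \<le> 1/8"
proof -
  let ?g = "\<lambda>a b c. (T a b c - quat_tensor a b c)\<^sup>2"
  have "?g a b c \<le> (\<Sum>c<4. ?g a b c)" by (rule member_le_sum) (use abc in auto)
  also have "\<dots> \<le> (\<Sum>b<4. \<Sum>c<4. ?g a b c)"
    by (rule member_le_sum[where f = "\<lambda>b. \<Sum>c<4. ?g a b c"]) (use abc in \<open>auto intro!: sum_nonneg\<close>)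
  also have "\<dots> \<le> (\<Sum>a<4. \<Sum>b<4. \<Sum>c<4. ?g a b c)"
    by (rule member_le_sum[where f = "\<lambda>a. \<Sum>b<4. \<Sum>c<4. ?g a b c"]) (use abc in \<open>auto intro!: sum_nonneg\<close>)
  also have "\<dots> < (1/8)\<^sup>2" using F by (simp add: Fro_def power2_eq_square)
  finally have "(T a b c - quat_tensor a b c)\<^sup>2 < (1/8)\<^sup>2" .
  thus ?thesis by (rule sq)
qed

lemma bnd4:
  assumes "\<bar>e0\<bar> \<le> 1/8" "\<bar>e1\<bar> \<le> 1/8" "\<bar>e2\<bar> \<le> 1/8" "\<bar>e3\<bar> \<le> 1/8"
  shows "\<bar>e0 * x0 + e1 * x1 + e2 * x2 + e3 * x3\<bar> \<le> \<bar>x0\<bar> / 8 + \<bar>x1\<bar> / 8 + \<bar>x2\<bar> / 8 + \<bar>x3\<bar> / (8::real)"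
proof -
  have m: "\<bar>e * x\<bar> \<le> \<bar>x\<bar> / 8" if "\<bar>e\<bar> \<le> 1/8" for e x :: real
    using mult_right_mono[OF that abs_ge_zero[of x]] by (simp add: abs_mult)
  have t: "\<bar>a + b + c + d\<bar> \<le> \<bar>a\<bar> + \<bar>b\<bar> + \<bar>c\<bar> + \<bar>d::real\<bar>" for a b c d by linarith
  show ?thesis using m[OF assms(1), of x0] m[OF assms(2), of x1] m[OF assms(3), of x2] m[OF assms(4), of x3]
    t[of "e0 * x0" "e1 * x1" "e2 * x2" "e3 * x3"] by linarith
qed
lemma sum4: "(\<Sum>a<(4::nat). f a) = f 0 + f 1 + f 2 + (f 3 :: real)"
  by (simp add: numeral_eq_Suc lessThan_Suc numeral_3_eq_3 numeral_2_eq_2)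

lemma yes2:
  assumes F: "Fro T < 1/64"
  shows "subrank_achievable 4 4 4 T 2"
proof -
  define E where "E = (\<lambda>a b c. T a b c - quat_tensor a b c)"
  have Eb: "\<bar>E a b c\<bar> \<le> 1/8" if "a < 4" "b < 4" "c < 4" for a b c
    using entry_small[OF F that] unfolding E_def .
  have TE: "T a b c = quat_tensor a b c + E a b c" for a b c unfolding E_def by simp
  define col where "col = (\<lambda>a. (T a 0 0, T a 0 2, T a 1 0, T a 1 2) :: r4)"
  define g :: "r4 \<Rightarrow> r4" where "g = (\<lambda>x. fst x *\<^sub>R col 0 + fst (snd x) *\<^sub>R col 1 +
     fst (snd (snd x)) *\<^sub>R col 2 + snd (snd (snd x)) *\<^sub>R col 3)"
  have lin: "linear g" unfolding g_def
    by (rule linearI) (auto simp: algebra_simps scaleR_add_left)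
  have gx: "g (x0, x1, x2, x3) = (x0 * T 0 0 0 + x1 * T 1 0 0 + x2 * T 2 0 0 + x3 * T 3 0 0,
      x0 * T 0 0 2 + x1 * T 1 0 2 + x2 * T 2 0 2 + x3 * T 3 0 2,
      x0 * T 0 1 0 + x1 * T 1 1 0 + x2 * T 2 1 0 + x3 * T 3 1 0,
      x0 * T 0 1 2 + x1 * T 1 1 2 + x2 * T 2 1 2 + x3 * T 3 1 2)" for x0 x1 x2 x3
    unfolding g_def col_def by simp
  have "inj g"
    unfolding linear_injective_0[OF lin]
  proof (intro allI impI)
    fix p :: r4 assume gp: "g p = 0"
    obtain x0 x1 x2 x3 where p: "p = (x0, x1, x2, x3)" by (cases p) auto
    have eqs: "x0 * T 0 0 0 + x1 * T 1 0 0 + x2 * T 2 0 0 + x3 * T 3 0 0 = 0"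
      "x0 * T 0 0 2 + x1 * T 1 0 2 + x2 * T 2 0 2 + x3 * T 3 0 2 = 0"
      "x0 * T 0 1 0 + x1 * T 1 1 0 + x2 * T 2 1 0 + x3 * T 3 1 0 = 0"
      "x0 * T 0 1 2 + x1 * T 1 1 2 + x2 * T 2 1 2 + x3 * T 3 1 2 = 0"
      using gp unfolding p gx by (simp_all add: zero_prod_def)
    let ?S = "\<bar>x0\<bar> / 8 + \<bar>x1\<bar> / 8 + \<bar>x2\<bar> / 8 + \<bar>x3\<bar> / (8::real)"
    have q: "quat_tensor 0 0 0 = 1" "quat_tensor 1 0 0 = 0" "quat_tensor 2 0 0 = 0" "quat_tensor 3 0 0 = 0"
      "quat_tensor 0 0 2 = 0" "quat_tensor 1 0 2 = 0" "quat_tensor 2 0 2 = 1" "quat_tensor 3 0 2 = 0"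
      "quat_tensor 0 1 0 = 0" "quat_tensor 1 1 0 = -1" "quat_tensor 2 1 0 = 0" "quat_tensor 3 1 0 = 0"
      "quat_tensor 0 1 2 = 0" "quat_tensor 1 1 2 = 0" "quat_tensor 2 1 2 = 0" "quat_tensor 3 1 2 = 1"
      by (simp_all add: quat_tensor_def hmult_def basis_vec_def)
    have "\<bar>x0\<bar> \<le> ?S"
    proof -
      have e: "x0 = - (E 0 0 0 * x0 + E 1 0 0 * x1 + E 2 0 0 * x2 + E 3 0 0 * x3)"
        using eqs(1) unfolding TE q by (simp add: algebra_simps)
      have b: "\<bar>E 0 0 0 * x0 + E 1 0 0 * x1 + E 2 0 0 * x2 + E 3 0 0 * x3\<bar> \<le> ?S" by (rule bnd4; rule Eb; simp)
      from e have "\<bar>x0\<bar> = \<bar>E 0 0 0 * x0 + E 1 0 0 * x1 + E 2 0 0 * x2 + E 3 0 0 * x3\<bar>" by (metis abs_minus_cancel)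
      thus ?thesis using b by simp
    qed
    moreover have "\<bar>x2\<bar> \<le> ?S"
    proof -
      have e: "x2 = - (E 0 0 2 * x0 + E 1 0 2 * x1 + E 2 0 2 * x2 + E 3 0 2 * x3)"
        using eqs(2) unfolding TE q by (simp add: algebra_simps)
      have b: "\<bar>E 0 0 2 * x0 + E 1 0 2 * x1 + E 2 0 2 * x2 + E 3 0 2 * x3\<bar> \<le> ?S" by (rule bnd4; rule Eb; simp)
      from e have "\<bar>x2\<bar> = \<bar>E 0 0 2 * x0 + E 1 0 2 * x1 + E 2 0 2 * x2 + E 3 0 2 * x3\<bar>" by (metis abs_minus_cancel)
      thus ?thesis using b by simp
    qed
    moreover have "\<bar>x1\<bar> \<le> ?S"
    proof -
      have e: "x1 = (E 0 1 0 * x0 + E 1 1 0 * x1 + E 2 1 0 * x2 + E 3 1 0 * x3)"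
        using eqs(3) unfolding TE q by (simp add: algebra_simps)
      have b: "\<bar>E 0 1 0 * x0 + E 1 1 0 * x1 + E 2 1 0 * x2 + E 3 1 0 * x3\<bar> \<le> ?S" by (rule bnd4; rule Eb; simp)
      from e have "\<bar>x1\<bar> = \<bar>E 0 1 0 * x0 + E 1 1 0 * x1 + E 2 1 0 * x2 + E 3 1 0 * x3\<bar>" by (metis abs_minus_cancel)
      thus ?thesis using b by simp
    qed
    moreover have "\<bar>x3\<bar> \<le> ?S"
    proof -
      have e: "x3 = - (E 0 1 2 * x0 + E 1 1 2 * x1 + E 2 1 2 * x2 + E 3 1 2 * x3)"
        using eqs(4) unfolding TE q by (simp add: algebra_simps)
      have b: "\<bar>E 0 1 2 * x0 + E 1 1 2 * x1 + E 2 1 2 * x2 + E 3 1 2 * x3\<bar> \<le> ?S" by (rule bnd4; rule Eb; simp)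
      from e have "\<bar>x3\<bar> = \<bar>E 0 1 2 * x0 + E 1 1 2 * x1 + E 2 1 2 * x2 + E 3 1 2 * x3\<bar>" by (metis abs_minus_cancel)
      thus ?thesis using b by simp
    qed
    ultimately have "x0 = 0 \<and> x1 = 0 \<and> x2 = 0 \<and> x3 = 0" by linarith
    thus "p = 0" using p by (simp add: zero_prod_def)
  qed
  hence sg: "surj g" using linear_injective_imp_surjective lin by blast
  obtain y0 y1 y2 y3 where gy: "g (y0, y1, y2, y3) = (1, 0, 0, 0)"
    using sg by (metis surjD prod_cases4)
  obtain z0 z1 z2 z3 where gz: "g (z0, z1, z2, z3) = (0, 0, 0, 1)"
    using sg by (metis surjD prod_cases4)
  note ey = gy[unfolded gx, simplified]
  note ez = gz[unfolded gx, simplified]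
  define A :: "nat \<Rightarrow> nat \<Rightarrow> real" where "A = (\<lambda>i a. if i = 0 then (if a = 0 then y0 else if a = 1 then y1 else if a = 2 then y2 else y3)
     else (if a = 0 then z0 else if a = 1 then z1 else if a = 2 then z2 else z3))"
  define B :: "nat \<Rightarrow> nat \<Rightarrow> real" where "B = (\<lambda>j b. if b = j then 1 else 0 :: real)"
  define C :: "nat \<Rightarrow> nat \<Rightarrow> real" where "C = (\<lambda>k c. if c = 2 * k then 1 else 0 :: real)"
  have red: "restrict3 A B C 4 4 4 T i j k = (\<Sum>a<4. A i a * T a j (2 * k))" if "j < 2" "k < 2" for i j k
  proof -
    have "restrict3 A B C 4 4 4 T i j k = (\<Sum>a<4. \<Sum>b<4. A i a * B j b * (\<Sum>c<4. C k c * T a b c))"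
      unfolding restrict3_def by (simp add: sum_distrib_left mult.assoc)
    also have "\<dots> = (\<Sum>a<4. \<Sum>b<4. A i a * B j b * T a b (2 * k))"
      using that unfolding C_def by (simp add: if_distrib[of "\<lambda>z. z * _"] sum.delta cong: if_cong)
    also have "\<dots> = (\<Sum>a<4. A i a * T a j (2 * k))"
      using that unfolding B_def by (simp add: sum.delta if_distrib[of "\<lambda>z. z * _"] if_distrib[of "\<lambda>z. _ * z"] cong: if_cong)
    finally show ?thesis .
  qed
  have "\<forall>i<2. \<forall>j<2. \<forall>k<2. restrict3 A B C 4 4 4 T i j k = unit_tensor 2 i j k"
  proof (intro allI impI)
    fix i j k :: nat assume ijk: "i < 2" "j < 2" "k < 2"
    have r: "restrict3 A B C 4 4 4 T i j k = A i 0 * T 0 j (2*k) + A i 1 * T 1 j (2*k) + A i 2 * T 2 j (2*k) + A i 3 * T 3 j (2*k)"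
      using red[OF ijk(2,3)] sum4 by simp
    from ijk have "i = 0 \<or> i = 1" "j = 0 \<or> j = 1" "k = 0 \<or> k = 1" by auto
    thus "restrict3 A B C 4 4 4 T i j k = unit_tensor 2 i j k"
      using ey ez r
      by (elim disjE) (simp_all add: A_def unit_tensor_def algebra_simps numeral_2_eq_2)
  qed
  thus ?thesis unfolding subrank_achievable_def by blast
qed

lemma trunc:
  assumes "subrank_achievable n1 n2 n3 T r" "s \<le> r"
  shows "subrank_achievable n1 n2 n3 T s"
proof -
  obtain A B C where H: "\<forall>i<r. \<forall>j<r. \<forall>k<r. restrict3 A B C n1 n2 n3 T i j k = unit_tensor r i j k"
    using assms(1) unfolding subrank_achievable_def by blast
  have "\<forall>i<s. \<forall>j<s. \<forall>k<s. restrict3 A B C n1 n2 n3 T i j k = unit_tensor s i j k"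
    using H assms(2) by (auto simp: unit_tensor_def)
  thus ?thesis unfolding subrank_achievable_def by blast
qed

lemma sub2:
  assumes F: "Fro T < 1/64"
  shows "subrank 4 4 4 T = 2"
proof -
  let ?S = "{r. subrank_achievable 4 4 4 T r}"
  have le: "r \<le> 2" if "r \<in> ?S" for r
  proof (rule ccontr)
    assume "\<not> r \<le> 2"
    hence "subrank_achievable 4 4 4 T 3" using trunc[of 4 4 4 T r 3] that by simp
    moreover have "Fro T < 1" using F by simp
    ultimately show False using no3 by blast
  qed
  have fin: "finite ?S" by (rule finite_subset[of _ "{..2}"]) (use le in auto)
  have "2 \<in> ?S" using yes2[OF F] by simp
  thus ?thesis unfolding subrank_def using fin le by (intro Max_eqI) auto
qed

theorem lemma4p12:
  shows "subrank 4 4 4 quat_tensor = 2 \<and>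
    (\<exists>\<epsilon>>0. \<forall>T'::tensor3.
       (\<Sum>a<4. \<Sum>b<4. \<Sum>c<4. (T' a b c - quat_tensor a b c)\<^sup>2) < \<epsilon>\<^sup>2
       \<longrightarrow> subrank 4 4 4 T' = 2)"
proof
  show "subrank 4 4 4 quat_tensor = 2" by (rule sub2) (simp add: Fro_def)
  show "\<exists>\<epsilon>>0. \<forall>T'::tensor3.
       (\<Sum>a<4. \<Sum>b<4. \<Sum>c<4. (T' a b c - quat_tensor a b c)\<^sup>2) < \<epsilon>\<^sup>2
       \<longrightarrow> subrank 4 4 4 T' = 2"
  proof (intro exI[of _ "1/8"] conjI allI impI)
    fix T' :: tensor3
    assume "(\<Sum>a<4. \<Sum>b<4. \<Sum>c<4. (T' a b c - quat_tensor a b c)\<^sup>2) < (1/8::real)\<^sup>2"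
    hence "Fro T' < 1/64" unfolding Fro_def by (simp add: power2_eq_square)
    thus "subrank 4 4 4 T' = 2" by (rule sub2)
  qed simp
qed
end
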